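(* Let $k \ge 1$, $m \ge 1$, and let $b(n) = \left\lfloor \frac{(n+1)^2}{8}\right\rfloor$ for $n \ge 0$. The number of odd Grassmannian involutions of $[m]$ that avoid $\operatorname{id}_k = 12\cdots k$ equals $b(m)$ if $m \le k$; equals $b(2k-m)$ if $k < m < 2k$ and $m-k$ is even; equals $b(2k-m-2)$ if $k < m < 2k$ and $m-k$ is odd; and equals $0$ if $m \ge 2k$.
   Context: A permutation is Grassmannian if it has at most one descent; a Grassmannian involution is a Grassmannian permutation $\pi$ with $\pi^{-1}=\pi$; it is odd if it has an odd number of inversions. A permutation avoids $12\cdots k$ if it has no increasing subsequence of length $k$. *)

theory Defs
  imports "HOL-Combinatorics.Permutations"
begin

text \<open>Permutations of [m] = {1..m} are functions \<pi> with \<pi> permutes {1..m}.\<close>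

definition descents :: "(nat \<Rightarrow> nat) \<Rightarrow> nat \<Rightarrow> nat set" where
  "descents \<pi> m = {i. 1 \<le> i \<and> i < m \<and> \<pi> i > \<pi> (Suc i)}"

definition grassmannian :: "(nat \<Rightarrow> nat) \<Rightarrow> nat \<Rightarrow> bool" where
  "grassmannian \<pi> m \<longleftrightarrow> card (descents \<pi> m) \<le> 1"

definition inversions :: "(nat \<Rightarrow> nat) \<Rightarrow> nat \<Rightarrow> (nat \<times> nat) set" where
  "inversions \<pi> m = {(i, j). 1 \<le> i \<and> i < j \<and> j \<le> m \<and> \<pi> i > \<pi> j}"

definition is_involution :: "(nat \<Rightarrow> nat) \<Rightarrow> bool" where
  "is_involution \<pi> \<longleftrightarrow> inv \<pi> = \<pi>"

definition contains_increasing :: "(nat \<Rightarrow> nat) \<Rightarrow> nat \<Rightarrow> nat \<Rightarrow> bool" where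
  "contains_increasing \<pi> m k \<longleftrightarrow>
     (\<exists>idx :: nat \<Rightarrow> nat. strict_mono_on {..<k} idx \<and> (\<forall>t<k. 1 \<le> idx t \<and> idx t \<le> m)
        \<and> strict_mono_on {..<k} (\<pi> \<circ> idx))"

definition avoids_increasing :: "(nat \<Rightarrow> nat) \<Rightarrow> nat \<Rightarrow> nat \<Rightarrow> bool" where
  "avoids_increasing \<pi> m k \<longleftrightarrow> \<not> contains_increasing \<pi> m k"

definition odd_grass_inv_avoiding :: "nat \<Rightarrow> nat \<Rightarrow> (nat \<Rightarrow> nat) set" where
  "odd_grass_inv_avoiding m k = {\<pi>. \<pi> permutes {1..m} \<and> grassmannian \<pi> m \<and> is_involution \<pi>
      \<and> odd (card (inversions \<pi> m)) \<and> avoids_increasing \<pi> m k}"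

definition bseq :: "nat \<Rightarrow> nat" where
  "bseq n = (n + 1)^2 div 8"

end

theory Submission
  imports Defs
begin

definition gi :: "nat \<Rightarrow> nat \<Rightarrow> nat \<Rightarrow> nat" where
  "gi a c i = (if a < i \<and> i \<le> a + c then i + c else if a + c < i \<and> i \<le> a + 2*c then i - c else i)"

lemma gi_gi: "gi a c (gi a c i) = i"
  by (auto simp: gi_def)

lemma gi_permutes: assumes "a + 2*c \<le> m" shows "gi a c permutes {1..m}"
  unfolding permutes_def
proof (intro conjI allI impI)
  fix x assume "x \<notin> {1..m}" then show "gi a c x = x" using assms by (auto simp: gi_def)
next
  fix y show "\<exists>!x. gi a c x = y"
    by (rule ex1I[of _ "gi a c y"]) (auto simp: gi_gi dest: arg_cong[of _ _ "gi a c"])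
qed

lemma gi_invol: "is_involution (gi a c)"
  unfolding is_involution_def by (rule inv_unique_comp) (auto simp: gi_gi fun_eq_iff)

lemma gi_grass: "grassmannian (gi a c) m"
proof -
  have "descents (gi a c) m \<subseteq> {a+c}"
    by (auto simp: descents_def gi_def split: if_splits)
  then have "card (descents (gi a c) m) \<le> card {a+c}" by (rule card_mono[rotated]) simp
  then show ?thesis by (simp add: grassmannian_def)
qed

lemma gi_inversions: assumes "a + 2*c \<le> m"
  shows "inversions (gi a c) m = {a<..a+c} \<times> {a+c<..a+2*c}"
  using assms by (auto simp: inversions_def gi_def split: if_splits)

lemma gi_odd: assumes "a + 2*c \<le> m"
  shows "odd (card (inversions (gi a c) m)) \<longleftrightarrow> odd c"
  using gi_inversions[OF assms] by (simp add: card_cartesian_product)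

lemma gi_contains: assumes "a + 2*c \<le> m"
  shows "contains_increasing (gi a c) m k \<longleftrightarrow> k + c \<le> m"
proof
  assume "contains_increasing (gi a c) m k"
  then obtain idx where sm: "strict_mono_on {..<k} idx" and bd: "\<forall>t<k. 1 \<le> idx t \<and> idx t \<le> m"
    and sg: "strict_mono_on {..<k} (gi a c \<circ> idx)" unfolding contains_increasing_def by blast
  define X where "X = {a<..a+c}"
  define Y where "Y = {a+c<..a+2*c}"
  have key: "\<not> ((\<exists>s<k. idx s \<in> X) \<and> (\<exists>t<k. idx t \<in> Y))"
  proof
    assume "(\<exists>s<k. idx s \<in> X) \<and> (\<exists>t<k. idx t \<in> Y)"
    then obtain s t where st: "s < k" "t < k" "idx s \<in> X" "idx t \<in> Y" by blast
    then have lt: "idx s < idx t" by (auto simp: X_def Y_def)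
    have "s < t"
    proof (rule ccontr)
      assume "\<not> s < t"
      then have "t < s \<or> t = s" by auto
      then show False
      proof
        assume "t < s" then have "idx t < idx s" using strict_mono_onD[OF sm] st by auto
        then show False using lt by simp
      qed (use lt in simp)
    qed
    then have "gi a c (idx s) < gi a c (idx t)" using strict_mono_onD[OF sg] st by auto
    moreover have "gi a c (idx s) = idx s + c" using st(3) by (auto simp: gi_def X_def)
    moreover have "gi a c (idx t) = idx t - c" using st(4) by (auto simp: gi_def Y_def)
    ultimately show False using st(3,4) by (auto simp: X_def Y_def)
  qed
  have inj: "inj_on idx {..<k}" by (rule strict_mono_on_imp_inj_on[OF sm])
  have ck: "card (idx ` {..<k}) = k" using card_image[OF inj] by simp
  have cX: "card X = c" "card Y = c" by (auto simp: X_def Y_def)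
  have sX: "X \<subseteq> {1..m}" "Y \<subseteq> {1..m}" using assms by (auto simp: X_def Y_def)
  from key have "idx ` {..<k} \<subseteq> {1..m} - X \<or> idx ` {..<k} \<subseteq> {1..m} - Y"
    using bd by auto
  then show "k + c \<le> m"
  proof
    assume "idx ` {..<k} \<subseteq> {1..m} - X"
    then have "card (idx ` {..<k}) \<le> card ({1..m} - X)" by (intro card_mono) auto
    also have "\<dots> = m - c" using card_Diff_subset[OF _ sX(1)] cX by (simp add: finite_subset[OF sX(1)])
    finally show ?thesis using ck cX sX assms by linarith
  next
    assume "idx ` {..<k} \<subseteq> {1..m} - Y"
    then have "card (idx ` {..<k}) \<le> card ({1..m} - Y)" by (intro card_mono) auto
    also have "\<dots> = m - c" using card_Diff_subset[OF _ sX(2)] cX by (simp add: finite_subset[OF sX(2)])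
    finally show ?thesis using ck cX sX assms by linarith
  qed
next
  assume kc: "k + c \<le> m"
  define idx where "idx t = (if t < a then t + 1 else t + 1 + c)" for t
  have v: "gi a c (idx t) = (if t < a + c then t + 1 else t + 1 + c)" for t
    by (auto simp: gi_def idx_def)
  show "contains_increasing (gi a c) m k"
    unfolding contains_increasing_def
  proof (intro exI[of _ idx] conjI allI impI)
    show "strict_mono_on {..<k} idx" by (rule strict_mono_onI) (auto simp: idx_def)
    show "strict_mono_on {..<k} (gi a c \<circ> idx)" by (rule strict_mono_onI) (auto simp: v)
  next
    fix t assume "t < k" then show "1 \<le> idx t" "idx t \<le> m" using kc by (auto simp: idx_def)
  qed
qed

lemma chain_mono:
  assumes "\<forall>i. p \<le> i \<longrightarrow> i < q \<longrightarrow> (f::nat\<Rightarrow>nat) i < f (Suc i)" "p \<le> i" "i < j" "j \<le> q"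
  shows "f i < f j"
  using assms(3,4)
proof (induction j)
  case 0 then show ?case by simp
next
  case (Suc j)
  show ?case
  proof (cases "i = j")
    case True then show ?thesis using assms(1,2) Suc by auto
  next
    case False then have "f i < f j" using Suc by auto
    also have "f j < f (Suc j)" using assms(1,2) Suc False by auto
    finally show ?thesis .
  qed
qed

lemma chain_lower:
  assumes "\<forall>i. p \<le> i \<longrightarrow> i < q \<longrightarrow> (f::nat\<Rightarrow>nat) i < f (Suc i)" "r \<le> f p" "p \<le> i" "i \<le> q"
  shows "r + (i - p) \<le> f i"
  using assms(3,4)
proof (induction i)
  case 0 then show ?case using assms(2) by simp
next
  case (Suc i)
  show ?case
  proof (cases "p = Suc i")
    case True then show ?thesis using assms(2) by simp
  next
    case False then have "r + (i - p) \<le> f i" using Suc by auto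
    moreover have "f i < f (Suc i)" using assms(1) Suc False by auto
    ultimately show ?thesis using False Suc by linarith
  qed
qed

lemma chain_upper:
  assumes "\<forall>i. p \<le> i \<longrightarrow> i < q \<longrightarrow> (f::nat\<Rightarrow>nat) i < f (Suc i)" "f q \<le> r" "p \<le> i" "i \<le> q"
  shows "f i + (q - i) \<le> r"
  using assms(4,3)
proof (induction rule: inc_induct)
  case base then show ?case using assms(2) by simp
next
  case (step n)
  have "f n < f (Suc n)" using assms(1) step by auto
  then show ?case using step by linarith
qed

lemma upclosed:
  assumes "S \<subseteq> {1..d}" "\<forall>i\<in>S. \<forall>j. i \<le> j \<and> j \<le> d \<longrightarrow> j \<in> S"
  shows "S = {d - card S<..d}"
proof (cases "S = {}")
  case True then show ?thesis by simp
next
  case False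
  have fin: "finite S" using assms(1) finite_subset by blast
  have mS: "Min S \<in> S" using Min_in[OF fin False] .
  have "S = {Min S..d}"
  proof
    show "S \<subseteq> {Min S..d}" using assms(1) fin by auto
    show "{Min S..d} \<subseteq> S" using assms(2) mS by auto
  qed
  moreover have "Min S \<ge> 1" using mS assms(1) by auto
  moreover have "Min S \<le> d" using mS assms(1) by auto
  moreover have "card S = Suc d - Min S" using \<open>S = {Min S..d}\<close> by (metis card_atLeastAtMost)
  ultimately have "d - card S = Min S - 1" by linarith
  then have e: "{d - card S<..d} = {Min S..d}" using \<open>Min S \<ge> 1\<close> by auto
  show ?thesis by (subst e) (rule \<open>S = {Min S..d}\<close>)
qed

lemma downclosed:
  assumes "S \<subseteq> {p<..q}" "\<forall>j\<in>S. \<forall>j'. p < j' \<and> j' \<le> j \<longrightarrow> j' \<in> S"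
  shows "S = {p<..p + card S}"
proof (cases "S = {}")
  case True then show ?thesis by simp
next
  case False
  have fin: "finite S" using assms(1) finite_subset by blast
  have mS: "Max S \<in> S" using Max_in[OF fin False] .
  have "S = {p<..Max S}"
  proof
    show "S \<subseteq> {p<..Max S}" using assms(1) fin by auto
    show "{p<..Max S} \<subseteq> S" using assms(2) mS by auto
  qed
  moreover have "Max S > p" using mS assms(1) by auto
  moreover have "card S = Max S - p" using \<open>S = {p<..Max S}\<close> by (metis card_greaterThanAtMost)
  ultimately have "p + card S = Max S" by linarith
  then show ?thesis using \<open>S = {p<..Max S}\<close> by simp
qed

lemma descent_split:
  assumes "\<pi> permutes {1..m}" "grassmannian \<pi> m"
  obtains d where "d \<le> m" "\<forall>i. 1 \<le> i \<longrightarrow> i < d \<longrightarrow> \<pi> i < \<pi> (Suc i)"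
    "\<forall>i. Suc d \<le> i \<longrightarrow> i < m \<longrightarrow> \<pi> i < \<pi> (Suc i)"
proof -
  have inj: "inj \<pi>" using permutes_inj[OF assms(1)] .
  have fin: "finite (descents \<pi> m)" by (rule finite_subset[of _ "{..<m}"]) (auto simp: descents_def)
  have ne: "\<pi> i \<noteq> \<pi> (Suc i)" for i using inj by (metis injD n_not_Suc_n)
  have c1: "\<forall>x\<in>descents \<pi> m. \<forall>y\<in>descents \<pi> m. x = y"
    using assms(2) card_le_Suc0_iff_eq[OF fin] by (simp add: grassmannian_def)
  show ?thesis
  proof (cases "descents \<pi> m = {}")
    case True
    show ?thesis
    proof (rule that[of m])
      show "\<forall>i. 1 \<le> i \<longrightarrow> i < m \<longrightarrow> \<pi> i < \<pi> (Suc i)"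
        using True ne by (auto simp: descents_def) (metis linorder_neqE_nat)
    qed auto
  next
    case False
    then obtain d where d: "d \<in> descents \<pi> m" by blast
    then have dd: "\<And>i. i \<in> descents \<pi> m \<Longrightarrow> i = d" using c1 by blast
    show ?thesis
    proof (rule that[of d])
      show "d \<le> m" using d by (auto simp: descents_def)
      show "\<forall>i. 1 \<le> i \<longrightarrow> i < d \<longrightarrow> \<pi> i < \<pi> (Suc i)"
      proof (intro allI impI)
        fix i assume "1 \<le> i" "i < d"
        moreover have "d < m" using d by (auto simp: descents_def)
        ultimately have "i \<notin> descents \<pi> m" using dd by auto
        then show "\<pi> i < \<pi> (Suc i)" using \<open>1 \<le> i\<close> \<open>i < d\<close> \<open>d < m\<close> ne[of i] by (auto simp: descents_def)
      qed
      show "\<forall>i. Suc d \<le> i \<longrightarrow> i < m \<longrightarrow> \<pi> i < \<pi> (Suc i)"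
      proof (intro allI impI)
        fix i assume "Suc d \<le> i" "i < m"
        moreover have "1 \<le> d" using d by (auto simp: descents_def)
        ultimately have "i \<notin> descents \<pi> m" using dd by auto
        then show "\<pi> i < \<pi> (Suc i)" using \<open>Suc d \<le> i\<close> \<open>i < m\<close> \<open>1 \<le> d\<close> ne[of i] by (auto simp: descents_def)
      qed
    qed
  qed
qed

lemma characterize:
  assumes perm: "\<pi> permutes {1..m}" and gr: "grassmannian \<pi> m" and iv: "is_involution \<pi>"
  shows "\<exists>a c. a + 2*c \<le> m \<and> \<pi> = gi a c"
proof -
  obtain d where dm: "d \<le> m" and A: "\<forall>i. 1 \<le> i \<longrightarrow> i < d \<longrightarrow> \<pi> i < \<pi> (Suc i)"
    and B: "\<forall>i. Suc d \<le> i \<longrightarrow> i < m \<longrightarrow> \<pi> i < \<pi> (Suc i)"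
    using descent_split[OF perm gr] by blast
  have pp: "\<pi> (\<pi> i) = i" for i
    using permutes_inverses(1)[OF perm, of i] iv by (simp add: is_involution_def)
  have rng: "i \<in> {1..m} \<Longrightarrow> \<pi> i \<in> {1..m}" for i using permutes_in_image[OF perm] by blast
  have out: "i \<notin> {1..m} \<Longrightarrow> \<pi> i = i" for i using permutes_not_in[OF perm] by blast
  have P1a: "i \<le> \<pi> i" if "1 \<le> i" "i \<le> d" for i
  proof -
    have "1 \<le> \<pi> 1" using rng[of 1] that dm by auto
    from chain_lower[OF A this that] show ?thesis using that by simp
  qed
  have P1b: "\<pi> i \<le> i" if "Suc d \<le> i" "i \<le> m" for i
  proof -
    have "\<pi> m \<le> m" using rng[of m] that by auto
    from chain_upper[OF B this that] show ?thesis using that by simp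
  qed
  define H where "H = {i \<in> {1..d}. d < \<pi> i}"
  define c where "c = card H"
  have Hsub: "H \<subseteq> {1..d}" by (auto simp: H_def)
  have cd: "c \<le> d" unfolding c_def using card_mono[OF _ Hsub] by simp
  have Heq: "H = {d - c<..d}" unfolding c_def
  proof (rule upclosed[OF Hsub], intro ballI allI impI)
    fix i j assume "i \<in> H" "i \<le> j \<and> j \<le> d"
    then show "j \<in> H"
    proof (cases "i = j")
      case False
      then have "\<pi> i < \<pi> j" using chain_mono[OF A, of i j] \<open>i \<in> H\<close> \<open>i \<le> j \<and> j \<le> d\<close> by (auto simp: H_def)
      then show ?thesis using \<open>i \<in> H\<close> \<open>i \<le> j \<and> j \<le> d\<close> by (auto simp: H_def)
    qed simp
  qed
  define L where "L = {j \<in> {Suc d..m}. \<pi> j \<le> d}"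
  have LH: "L = \<pi> ` H"
  proof
    show "\<pi> ` H \<subseteq> L"
    proof
      fix j assume "j \<in> \<pi> ` H"
      then obtain i where i: "i \<in> H" "j = \<pi> i" by blast
      then show "j \<in> L" using rng[of i] pp[of i] dm by (auto simp: H_def L_def)
    qed
    show "L \<subseteq> \<pi> ` H"
    proof
      fix j assume j: "j \<in> L"
      then have "\<pi> j \<in> H" using rng[of j] pp[of j] dm by (auto simp: H_def L_def)
      then show "j \<in> \<pi> ` H" using pp[of j] by (metis image_eqI)
    qed
  qed
  have cL: "card L = c" unfolding LH c_def
    by (rule card_image) (use permutes_inj[OF perm] in \<open>auto simp: inj_on_def\<close>)
  have Lsub: "L \<subseteq> {d<..m}" by (auto simp: L_def)
  have Leq: "L = {d<..d + c}"
  proof -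
    have "L = {d<..d + card L}"
    proof (rule downclosed)
      show "L \<subseteq> {d<..m}" by (rule Lsub)
      show "\<forall>j\<in>L. \<forall>j'. d < j' \<and> j' \<le> j \<longrightarrow> j' \<in> L"
      proof (intro ballI allI impI)
        fix j j' assume "j \<in> L" "d < j' \<and> j' \<le> j"
        then show "j' \<in> L"
        proof (cases "j' = j")
          case False
          then have "\<pi> j' < \<pi> j" using chain_mono[OF B, of j' j] \<open>j \<in> L\<close> \<open>d < j' \<and> j' \<le> j\<close> by (auto simp: L_def)
          then show ?thesis using \<open>j \<in> L\<close> \<open>d < j' \<and> j' \<le> j\<close> by (auto simp: L_def)
        qed simp
      qed
    qed
    then show ?thesis using cL by simp
  qed
  have dcm: "d + c \<le> m"
  proof (cases "c = 0")
    case False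
    then have "d + c \<in> L" using Leq by auto
    then show ?thesis using Lsub by auto
  qed (use dm in simp)
  have shH: "\<pi> i = i + c" if "d - c < i" "i \<le> d" for i
  proof -
    have A': "\<forall>t. Suc (d - c) \<le> t \<longrightarrow> t < d \<longrightarrow> \<pi> t < \<pi> (Suc t)" using A by auto
    have inL: "\<pi> t \<in> L" if "d - c < t" "t \<le> d" for t using LH Heq that by auto
    have lo: "Suc d \<le> \<pi> (Suc (d - c))"
      using inL[of "Suc (d - c)"] Leq that by auto
    have hi: "\<pi> d \<le> d + c" using inL[of d] Leq that by auto
    have "Suc d + (i - Suc (d - c)) \<le> \<pi> i" using chain_lower[OF A' lo] that by simp
    moreover have "\<pi> i + (d - i) \<le> d + c" using chain_upper[OF A' hi] that by simp
    ultimately show ?thesis using that cd by linarith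
  qed
  have shL: "\<pi> j = j - c" if "d < j" "j \<le> d + c" for j
  proof -
    have "\<pi> (j - c) = j - c + c" using shH[of "j - c"] that cd by auto
    then have "\<pi> (j - c) = j" using that cd by simp
    then show ?thesis using pp[of "j - c"] by simp
  qed
  have fixlo: "\<pi> i = i" if "1 \<le> i" "i \<le> d - c" for i
  proof -
    have nH: "i \<notin> H" using Heq that by auto
    then have le: "\<pi> i \<le> d" using that cd by (auto simp: H_def)
    have ge: "i \<le> \<pi> i" using P1a that cd by auto
    show ?thesis
    proof (rule ccontr)
      assume "\<pi> i \<noteq> i"
      then have "i < \<pi> i" using ge by simp
      moreover have "\<pi> i \<le> \<pi> (\<pi> i)" using P1a[of "\<pi> i"] le ge that by auto
      ultimately show False using pp[of i] by simp
    qed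
  qed
  have fixhi: "\<pi> j = j" if "d + c < j" "j \<le> m" for j
  proof -
    have nL: "j \<notin> L" using Leq that by auto
    then have gt: "d < \<pi> j" using that by (auto simp: L_def)
    have le: "\<pi> j \<le> j" using P1b that by auto
    show ?thesis
    proof (rule ccontr)
      assume "\<pi> j \<noteq> j"
      then have "\<pi> j < j" using le by simp
      moreover have "\<pi> (\<pi> j) \<le> \<pi> j" using P1b[of "\<pi> j"] gt le that by auto
      ultimately show False using pp[of j] by simp
    qed
  qed
  show ?thesis
  proof (intro exI conjI)
    show "d - c + 2 * c \<le> m" using dcm cd by simp
    show "\<pi> = gi (d - c) c"
    proof
      fix i
      consider "i = 0" | "1 \<le> i \<and> i \<le> d - c" | "d - c < i \<and> i \<le> d" | "d < i \<and> i \<le> d + c"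
        | "d + c < i \<and> i \<le> m" | "m < i" by linarith
      then show "\<pi> i = gi (d - c) c i"
      proof cases
        case 1 then show ?thesis using out[of i] by (simp add: gi_def)
      next
        case 2 then show ?thesis using fixlo[of i] cd by (auto simp: gi_def)
      next
        case 3 then show ?thesis using shH[of i] cd by (simp add: gi_def)
      next
        case 4 then show ?thesis using shL[of i] cd by (simp add: gi_def)
      next
        case 5 then show ?thesis using fixhi[of i] cd by (simp add: gi_def)
      next
        case 6 then show ?thesis using out[of i] cd dcm by (simp add: gi_def)
      qed
    qed
  qed
qed

definition Qs :: "nat \<Rightarrow> (nat \<times> nat) set" where
  "Qs n = {(a, c). odd c \<and> a + 2*c \<le> n}"

lemma Qs_finite: "finite (Qs n)"
  by (rule finite_subset[of _ "{..n} \<times> {..n}"]) (auto simp: Qs_def)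

lemma Qs_split: "Qs n = (\<lambda>a. (a, 1)) ` {..<n - 1} \<union> (\<lambda>(a,c). (a, c + 2)) ` {(a, c). odd c \<and> a + 2*c + 4 \<le> n}"
proof
  show "Qs n \<subseteq> (\<lambda>a. (a, 1)) ` {..<n - 1} \<union> (\<lambda>(a,c). (a, c + 2)) ` {(a, c). odd c \<and> a + 2*c + 4 \<le> n}"
  proof
    fix x assume "x \<in> Qs n"
    then obtain a c where x: "x = (a, c)" "odd c" "a + 2*c \<le> n" by (auto simp: Qs_def)
    show "x \<in> (\<lambda>a. (a, 1)) ` {..<n - 1} \<union> (\<lambda>(a,c). (a, c + 2)) ` {(a, c). odd c \<and> a + 2*c + 4 \<le> n}"
    proof (cases "c = 1")
      case True then show ?thesis using x by auto
    next
      case False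
      then have "c \<ge> 3" using x(2) by presburger
      then have "(a, c - 2) \<in> {(a, c). odd c \<and> a + 2*c + 4 \<le> n}" using x by auto
      moreover have "x = (\<lambda>(a,c). (a, c + 2)) (a, c - 2)" using x \<open>c \<ge> 3\<close> by auto
      ultimately show ?thesis by blast
    qed
  qed
  show "(\<lambda>a. (a, 1)) ` {..<n - 1} \<union> (\<lambda>(a,c). (a, c + 2)) ` {(a, c). odd c \<and> a + 2*c + 4 \<le> n} \<subseteq> Qs n"
    by (auto simp: Qs_def)
qed

lemma bs4: "bseq (p + 4) = bseq p + (p+3)"
proof -
  have "(p + 5)^2 = (p+1)^2 + (p + 3) * 8" by (simp add: power2_eq_square algebra_simps)
  then have "(p + 5)^2 div 8 = (p+1)^2 div 8 + (p+3)" by simp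
  moreover have "p + 4 + 1 = p + 5" by simp
  ultimately show ?thesis unfolding bseq_def by metis
qed

lemma bs_small: "(n::nat) < 4 \<Longrightarrow> bseq n = n - 1"
proof -
  assume "n < 4" then have "n = 0 \<or> n = 1 \<or> n = 2 \<or> n = 3" by auto
  then show ?thesis by (auto simp: bseq_def power2_eq_square)
qed

lemma Qs_card: "card (Qs n) = bseq n"
proof (induction n rule: less_induct)
  case (less n)
  define R where "R = {(a, c). odd c \<and> a + 2*c + 4 \<le> n}"
  have finR: "finite R" by (rule finite_subset[of _ "{..n} \<times> {..n}"]) (auto simp: R_def)
  have disj: "(\<lambda>a. (a, 1::nat)) ` {..<n - 1} \<inter> (\<lambda>(a,c). (a, c + 2)) ` R = {}" by auto
  have inj: "inj_on (\<lambda>(a,c). (a, c + 2::nat)) R" by (auto simp: inj_on_def)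
  have ci: "card ((\<lambda>(a,c). (a, c + 2::nat)) ` R) = card R" by (rule card_image[OF inj])
  have ca: "card ((\<lambda>a. (a, 1::nat)) ` {..<n - 1}) = n - 1" by (subst card_image) (auto simp: inj_on_def)
  have "card (Qs n) = card ((\<lambda>a. (a, 1::nat)) ` {..<n - 1}) + card ((\<lambda>(a,c). (a, c + 2::nat)) ` R)"
    unfolding Qs_split R_def[symmetric]
    by (rule card_Un_disjoint) (use disj finR in auto)
  then have "card (Qs n) = (n - 1) + card R" using ci ca by simp
  also have "\<dots> = bseq n"
  proof (cases "n \<ge> 4")
    case True
    then obtain p where p: "n = p + 4" by (metis add.commute le_add_diff_inverse)
    have "R = Qs p" by (auto simp: R_def Qs_def p)
    then have "card R = bseq p" using less p by simp
    moreover have "bseq n = bseq p + (p + 3)" unfolding p by (rule bs4)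
    ultimately show ?thesis using p by simp
  next
    case False
    then have "R = {}" by (auto simp: R_def)
    moreover have "bseq n = n - 1" using False bs_small by simp
    ultimately show ?thesis by simp
  qed
  finally show ?case .
qed

lemma odd_ge1: "odd (c::nat) \<Longrightarrow> 1 \<le> c" by (cases c) auto

definition Ps :: "nat \<Rightarrow> nat \<Rightarrow> (nat \<times> nat) set" where
  "Ps m k = {(a, c). odd c \<and> a + 2*c \<le> m \<and> m < k + c}"

lemma set_eq_Ps: "odd_grass_inv_avoiding m k = (\<lambda>(a,c). gi a c) ` Ps m k"
proof
  show "odd_grass_inv_avoiding m k \<subseteq> (\<lambda>(a,c). gi a c) ` Ps m k"
  proof
    fix \<pi> assume "\<pi> \<in> odd_grass_inv_avoiding m k"
    then have h: "\<pi> permutes {1..m}" "grassmannian \<pi> m" "is_involution \<pi>"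
      "odd (card (inversions \<pi> m))" "avoids_increasing \<pi> m k"
      by (auto simp: odd_grass_inv_avoiding_def)
    obtain a c where ac: "a + 2*c \<le> m" "\<pi> = gi a c" using characterize[OF h(1-3)] by blast
    have "odd c" using h(4) gi_odd[OF ac(1)] ac(2) by simp
    moreover have "m < k + c" using h(5) gi_contains[OF ac(1)] ac(2) by (auto simp: avoids_increasing_def)
    ultimately have "(a, c) \<in> Ps m k" using ac by (auto simp: Ps_def)
    then show "\<pi> \<in> (\<lambda>(a,c). gi a c) ` Ps m k" using ac(2) by force
  qed
  show "(\<lambda>(a,c). gi a c) ` Ps m k \<subseteq> odd_grass_inv_avoiding m k"
  proof
    fix \<pi> assume "\<pi> \<in> (\<lambda>(a,c). gi a c) ` Ps m k"
    then obtain a c where ac: "odd c" "a + 2*c \<le> m" "m < k + c" "\<pi> = gi a c" by (auto simp: Ps_def)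
    show "\<pi> \<in> odd_grass_inv_avoiding m k"
      unfolding odd_grass_inv_avoiding_def avoids_increasing_def
      using ac gi_permutes[OF ac(2)] gi_grass gi_invol gi_odd[OF ac(2)] gi_contains[OF ac(2)] by auto
  qed
qed

lemma inj_Ps: "inj_on (\<lambda>(a,c). gi a c) (Ps m k)"
proof (rule inj_onI, clarsimp)
  fix a c a' c' assume "(a, c) \<in> Ps m k" "(a', c') \<in> Ps m k" and e: "gi a c = gi a' c'"
  then have c: "c \<ge> 1" "c' \<ge> 1" by (auto simp: Ps_def dest: odd_ge1)
  have aa: "a = a'"
  proof (rule ccontr)
    assume "a \<noteq> a'"
    then have "a < a' \<or> a' < a" by auto
    then show False
    proof
      assume "a < a'"
      have "gi a c (Suc a) = gi a' c' (Suc a)" using e by simp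
      then show False using \<open>a < a'\<close> c by (auto simp: gi_def)
    next
      assume "a' < a"
      have "gi a c (Suc a') = gi a' c' (Suc a')" using e by simp
      then show False using \<open>a' < a\<close> c by (auto simp: gi_def split: if_splits)
    qed
  qed
  have "gi a c (Suc a) = gi a' c' (Suc a)" using e by simp
  then have "c = c'" using aa c by (auto simp: gi_def)
  then show "a = a' \<and> c = c'" using aa by simp
qed

lemma card_shift: "card ((\<lambda>(a,c). (a, c + s)) ` X) = card (X :: (nat \<times> nat) set)"
  by (rule card_image) (auto simp: inj_on_def)

lemma Ps_card: assumes "k \<ge> 1"
  shows "card (Ps m k) =
    (if m \<le> k then bseq m
     else if m < 2 * k \<and> even (m - k) then bseq (2 * k - m)
     else if m < 2 * k \<and> odd (m - k) then bseq (2 * k - m - 2)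
     else 0)"
proof -
  consider "m \<le> k" | "k < m \<and> m < 2*k \<and> even (m - k)" | "k < m \<and> m < 2*k \<and> odd (m - k)" | "2*k \<le> m"
    by linarith
  then show ?thesis
  proof cases
    case 1
    have "Ps m k = Qs m" using 1 by (auto simp: Ps_def Qs_def dest: odd_ge1)
    then show ?thesis using 1 Qs_card by simp
  next
    case 2
    then obtain e where e: "m = k + 2*e" by (metis evenE le_add_diff_inverse less_imp_le_nat)
    have "Ps m k = (\<lambda>(a,c). (a, c + 2*e)) ` Qs (2*k - m)"
    proof
      show "Ps m k \<subseteq> (\<lambda>(a,c). (a, c + 2*e)) ` Qs (2*k - m)"
      proof
        fix x assume "x \<in> Ps m k"
        then obtain a c where x: "x = (a,c)" "odd c" "a + 2*c \<le> m" "m < k + c" by (auto simp: Ps_def)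
        then have "(a, c - 2*e) \<in> Qs (2*k - m)" using e by (auto simp: Qs_def)
        moreover have "x = (\<lambda>(a,c). (a, c + 2*e)) (a, c - 2*e)" using x e by auto
        ultimately show "x \<in> (\<lambda>(a,c). (a, c + 2*e)) ` Qs (2*k - m)" by blast
      qed
      show "(\<lambda>(a,c). (a, c + 2*e)) ` Qs (2*k - m) \<subseteq> Ps m k"
        using 2 e by (auto simp: Ps_def Qs_def dest: odd_ge1)
    qed
    then have "card (Ps m k) = bseq (2*k - m)" using Qs_card card_shift by simp
    moreover have "\<not> m \<le> k" "m < 2 * k \<and> even (m - k)" using 2 by auto
    ultimately show ?thesis by (simp only: if_False if_True simp_thms)
  next
    case 3
    then obtain e where e: "m = k + 2*e + 1" by (metis oddE le_add_diff_inverse less_imp_le_nat add.assoc)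
    have "Ps m k = (\<lambda>(a,c). (a, c + (2*e + 2))) ` Qs (2*k - m - 2)"
    proof
      show "Ps m k \<subseteq> (\<lambda>(a,c). (a, c + (2*e+2))) ` Qs (2*k - m - 2)"
      proof
        fix x assume "x \<in> Ps m k"
        then obtain a c where x: "x = (a,c)" "odd c" "a + 2*c \<le> m" "m < k + c" by (auto simp: Ps_def)
        then have "c \<ge> 2*e + 3" using e by presburger
        then have "(a, c - (2*e+2)) \<in> Qs (2*k - m - 2)" using e x by (auto simp: Qs_def)
        moreover have "x = (\<lambda>(a,c). (a, c + (2*e+2))) (a, c - (2*e+2))" using x \<open>c \<ge> 2*e + 3\<close> by auto
        ultimately show "x \<in> (\<lambda>(a,c). (a, c + (2*e+2))) ` Qs (2*k - m - 2)" by blast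
      qed
      show "(\<lambda>(a,c). (a, c + (2*e+2))) ` Qs (2*k - m - 2) \<subseteq> Ps m k"
        using 3 e by (auto simp: Ps_def Qs_def dest: odd_ge1)
    qed
    then have "card (Ps m k) = bseq (2*k - m - 2)" using Qs_card card_shift[of "2*e+2"] by (simp only:)
    moreover have "\<not> m \<le> k" "\<not> (m < 2 * k \<and> even (m - k))" "m < 2 * k \<and> odd (m - k)" using 3 by auto
    ultimately show ?thesis by (simp only: if_False if_True simp_thms)
  next
    case 4
    have "Ps m k = {}" using 4 by (auto simp: Ps_def)
    then show ?thesis using 4 assms by auto
  qed
qed

theorem mainTheorem20:
  fixes k m :: nat
  assumes "k \<ge> 1" and "m \<ge> 1"
  shows "card (odd_grass_inv_avoiding m k) =
    (if m \<le> k then bseq m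
     else if m < 2 * k \<and> even (m - k) then bseq (2 * k - m)
     else if m < 2 * k \<and> odd (m - k) then bseq (2 * k - m - 2)
     else 0)"
  unfolding set_eq_Ps card_image[OF inj_Ps] using Ps_card[OF assms(1)] .

end
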